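(* Let $(S,\mathcal{A},\mu)$ be a complete, $\sigma$-finite measure space and $X$ a real Banach space with property $( ** )$. Then $L^1(\mu,X)$ and $L^\infty(\mu,X)$ also have property $( ** )$.
   Context: For a real Banach space $X$, $y^*\in S_{X^*}$ and $\varepsilon>0$, $S(y^*,\varepsilon)=\{z\in B_X:y^*(z)>1-\varepsilon\}$, and $d(x,A)=\inf_{a\in A}\|x-a\|$. $X$ has property $( ** )$ if for all $x_1,x_2\in S_X$ and each $\varepsilon>0$ there is $y^*\in S_{X^*}$ with $x_1\in S(y^*,\varepsilon)$ and $d(x_2,S(y^*,\varepsilon))+d(x_2,-S(y^*,\varepsilon))<2+\varepsilon$. $L^1(\mu,X)$, $L^\infty(\mu,X)$ are the Lebesgue–Bochner spaces. *)

theory Defs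
  imports "HOL-Analysis.Analysis"
begin

text \<open>A (semi)normed real vector space is presented by a carrier V, explicit addition,
  scalar multiplication and a seminorm N.  Working with a seminorm on the space of
  functions is equivalent to working on the quotient by null functions.\<close>

definition dual_sphere ::
  "'v set \<Rightarrow> ('v \<Rightarrow> 'v \<Rightarrow> 'v) \<Rightarrow> (real \<Rightarrow> 'v \<Rightarrow> 'v) \<Rightarrow> ('v \<Rightarrow> real) \<Rightarrow> ('v \<Rightarrow> real) set" where
  "dual_sphere V add scal N = {y.
      (\<forall>u\<in>V. \<forall>v\<in>V. y (add u v) = y u + y v) \<and>
      (\<forall>c. \<forall>u\<in>V. y (scal c u) = c * y u) \<and>
      (\<exists>C. \<forall>z\<in>V. \<bar>y z\<bar> \<le> C * N z) \<and>
      Sup {\<bar>y z\<bar> | z. z \<in> V \<and> N z \<le> 1} = 1}"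

definition slice :: "'v set \<Rightarrow> ('v \<Rightarrow> real) \<Rightarrow> ('v \<Rightarrow> real) \<Rightarrow> real \<Rightarrow> 'v set" where
  "slice V N y \<epsilon> = {z \<in> V. N z \<le> 1 \<and> y z > 1 - \<epsilon>}"

definition sdist ::
  "('v \<Rightarrow> 'v \<Rightarrow> 'v) \<Rightarrow> (real \<Rightarrow> 'v \<Rightarrow> 'v) \<Rightarrow> ('v \<Rightarrow> real) \<Rightarrow> 'v \<Rightarrow> 'v set \<Rightarrow> real" where
  "sdist add scal N x A = Inf {N (add x (scal (-1) a)) | a. a \<in> A}"

definition property_star_star ::
  "'v set \<Rightarrow> ('v \<Rightarrow> 'v \<Rightarrow> 'v) \<Rightarrow> (real \<Rightarrow> 'v \<Rightarrow> 'v) \<Rightarrow> ('v \<Rightarrow> real) \<Rightarrow> bool" where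
  "property_star_star V add scal N \<longleftrightarrow>
    (\<forall>x1\<in>V. \<forall>x2\<in>V. N x1 = 1 \<longrightarrow> N x2 = 1 \<longrightarrow> (\<forall>\<epsilon>>0.
      (\<exists>y\<in>dual_sphere V add scal N. x1 \<in> slice V N y \<epsilon> \<and>
         sdist add scal N x2 (slice V N y \<epsilon>)
         + sdist add scal N x2 (scal (-1) ` slice V N y \<epsilon>) < 2 + \<epsilon>)))"

text \<open>Property (**) of a real Banach space (type).\<close>
abbreviation banach_property_star_star :: "'b::banach itself \<Rightarrow> bool" where
  "banach_property_star_star _ \<equiv> property_star_star (UNIV :: 'b set) (+) (*\<^sub>R) norm"

text \<open>Strong (Bochner) measurability: a.e. limit of a sequence of simple functions.\<close>
definition strongly_measurable :: "'a measure \<Rightarrow> ('a \<Rightarrow> 'b::real_normed_vector) \<Rightarrow> bool" where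
  "strongly_measurable M f \<longleftrightarrow>
    (\<exists>s :: nat \<Rightarrow> 'a \<Rightarrow> 'b. (\<forall>n. simple_function M (s n)) \<and>
       (AE x in M. (\<lambda>n. s n x) \<longlonglongrightarrow> f x))"

definition fun_add :: "('a \<Rightarrow> 'b::real_vector) \<Rightarrow> ('a \<Rightarrow> 'b) \<Rightarrow> 'a \<Rightarrow> 'b" where
  "fun_add f g = (\<lambda>x. f x + g x)"

definition fun_scal :: "real \<Rightarrow> ('a \<Rightarrow> 'b::real_vector) \<Rightarrow> 'a \<Rightarrow> 'b" where
  "fun_scal c f = (\<lambda>x. c *\<^sub>R f x)"

text \<open>Lebesgue--Bochner space L^1(M,X) (carrier and seminorm).\<close>
definition L1_set :: "'a measure \<Rightarrow> ('a \<Rightarrow> 'b::real_normed_vector) set" where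
  "L1_set M = {f. strongly_measurable M f \<and> (\<integral>\<^sup>+ x. ennreal (norm (f x)) \<partial>M) < \<infinity>}"

definition L1_norm :: "'a measure \<Rightarrow> ('a \<Rightarrow> 'b::real_normed_vector) \<Rightarrow> real" where
  "L1_norm M f = enn2real (\<integral>\<^sup>+ x. ennreal (norm (f x)) \<partial>M)"

text \<open>Lebesgue--Bochner space L^infinity(M,X) (carrier and seminorm = essential sup of the norm).\<close>
definition Linf_set :: "'a measure \<Rightarrow> ('a \<Rightarrow> 'b::real_normed_vector) set" where
  "Linf_set M = {f. strongly_measurable M f \<and> (\<exists>C. AE x in M. norm (f x) \<le> C)}"

definition Linf_norm :: "'a measure \<Rightarrow> ('a \<Rightarrow> 'b::real_normed_vector) \<Rightarrow> real" where
  "Linf_norm M f = Inf {C. 0 \<le> C \<and> (AE x in M. norm (f x) \<le> C)}"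

end

theory Submission
  imports Defs
begin


lemma ae_lim_meas:
  fixes g :: "'a \<Rightarrow> real"
  assumes cm: "complete_measure M" and u: "\<And>n. u n \<in> borel_measurable M"
    and lim: "AE x in M. (\<lambda>n. u n x) \<longlonglongrightarrow> g x"
  shows "g \<in> borel_measurable M"
proof -
  obtain N where N: "N \<in> sets M" "emeasure M N = 0" "{x\<in>space M. \<not> (\<lambda>n. u n x) \<longlonglongrightarrow> g x} \<subseteq> N"
    using lim by (auto elim!: AE_E)
  define g' where "g' x = (if x \<in> N then 0 else g x)" for x
  have "g' \<in> borel_measurable M"
  proof (rule borel_measurable_LIMSEQ_metric[of "\<lambda>n x. if x \<in> N then 0 else u n x"])
    show "(\<lambda>x. if x \<in> N then 0 else u n x) \<in> borel_measurable M" for n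
      using u N(1) by (intro measurable_If_set) auto
    show "(\<lambda>n. if x \<in> N then 0 else u n x) \<longlonglongrightarrow> g' x" if "x \<in> space M" for x
      using that N(3) by (auto simp: g'_def)
  qed
  show ?thesis
  proof (rule measurableI)
    show "g x \<in> space borel" for x by simp
    fix A :: "real set" assume A: "A \<in> sets borel"
    have A': "g' -` A \<inter> space M \<in> sets M" using \<open>g' \<in> borel_measurable M\<close> A by (rule measurable_sets)
    have "AE x in M. x \<in> g' -` A \<inter> space M \<longleftrightarrow> x \<in> g -` A \<inter> space M"
      by (rule AE_I'[of N]) (use N in \<open>auto simp: g'_def null_sets_def\<close>)
    then show "g -` A \<inter> space M \<in> sets M"
      using complete_measure.in_sets_AE[OF cm _ A'] by blast
  qed
qed

lemma sm_comp_meas: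
  fixes f :: "'a \<Rightarrow> 'b::real_normed_vector" and \<phi> :: "'b \<Rightarrow> real"
  assumes cm: "complete_measure M" and sm: "strongly_measurable M f" and c: "continuous_on UNIV \<phi>"
  shows "(\<lambda>x. \<phi> (f x)) \<in> borel_measurable M"
proof -
  obtain s where s: "\<And>n. simple_function M (s n)" "AE x in M. (\<lambda>n. s n x) \<longlonglongrightarrow> f x"
    using sm unfolding strongly_measurable_def by blast
  show ?thesis
  proof (rule ae_lim_meas[OF cm])
    show "(\<lambda>x. \<phi> (s n x)) \<in> borel_measurable M" for n
      by (rule borel_measurable_simple_function) (rule simple_function_compose1[OF s(1)])
    show "AE x in M. (\<lambda>n. \<phi> (s n x)) \<longlonglongrightarrow> \<phi> (f x)"
      using s(2) by eventually_elim (metis c continuous_on_tendsto_compose UNIV_I eventually_sequentially)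
  qed
qed

lemma sm_simple: "simple_function M f \<Longrightarrow> strongly_measurable M f"
  unfolding strongly_measurable_def by (rule exI[of _ "\<lambda>n. f"]) auto

lemma sm_add:
  assumes "strongly_measurable M f" "strongly_measurable M g"
  shows "strongly_measurable M (\<lambda>x. f x + g x)"
proof -
  obtain s where s: "\<And>n. simple_function M (s n)" "AE x in M. (\<lambda>n. s n x) \<longlonglongrightarrow> f x"
    using assms(1) unfolding strongly_measurable_def by blast
  obtain r where r: "\<And>n. simple_function M (r n)" "AE x in M. (\<lambda>n. r n x) \<longlonglongrightarrow> g x"
    using assms(2) unfolding strongly_measurable_def by blast
  show ?thesis unfolding strongly_measurable_def
    apply (rule exI[of _ "\<lambda>n x. s n x + r n x"])
    using s r by (auto intro: simple_function_compose2 tendsto_add elim!: AE_mp)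
qed

lemma sm_scal:
  assumes "strongly_measurable M f"
  shows "strongly_measurable M (\<lambda>x. c *\<^sub>R f x)"
proof -
  obtain s where s: "\<And>n. simple_function M (s n)" "AE x in M. (\<lambda>n. s n x) \<longlonglongrightarrow> f x"
    using assms(1) unfolding strongly_measurable_def by blast
  show ?thesis unfolding strongly_measurable_def
    apply (rule exI[of _ "\<lambda>n x. c *\<^sub>R s n x"])
    using s by (auto intro: simple_function_compose1 tendsto_scaleR elim!: AE_mp[OF _ AE_I2])
qed

lemma sm_If:
  assumes "strongly_measurable M f" "strongly_measurable M g" "A \<in> sets M"
  shows "strongly_measurable M (\<lambda>x. if x \<in> A then f x else g x)"
proof -
  obtain s where s: "\<And>n. simple_function M (s n)" "AE x in M. (\<lambda>n. s n x) \<longlonglongrightarrow> f x"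
    using assms(1) unfolding strongly_measurable_def by blast
  obtain r where r: "\<And>n. simple_function M (r n)" "AE x in M. (\<lambda>n. r n x) \<longlonglongrightarrow> g x"
    using assms(2) unfolding strongly_measurable_def by blast
  have "A \<inter> space M \<in> sets M" using assms(3) by auto
  then show ?thesis unfolding strongly_measurable_def
    apply (intro exI[of _ "\<lambda>n x. if x \<in> A then s n x else r n x"] conjI allI)
     apply (rule simple_function_If_set[OF s(1) r(1)], assumption)
    using s(2) r(2) by eventually_elim auto
qed



lemma norm_sgn_scale: "norm x *\<^sub>R sgn x = (x::'b::real_normed_vector)"
  by (cases "x = 0") (simp_all add: sgn_div_norm)

lemma ds_bound:
  fixes Y :: "'b::real_normed_vector \<Rightarrow> real"
  assumes "Y \<in> dual_sphere UNIV (+) (*\<^sub>R) norm"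
  shows "\<bar>Y x\<bar> \<le> norm x"
proof -
  have add: "\<And>u v. Y (u + v) = Y u + Y v" and sc: "\<And>c u. Y (c *\<^sub>R u) = c * Y u"
    and S: "Sup {\<bar>Y z\<bar> | z. z \<in> UNIV \<and> norm z \<le> 1} = 1"
    using assms unfolding dual_sphere_def by auto
  obtain C where C: "\<And>z. \<bar>Y z\<bar> \<le> C * norm z" using assms unfolding dual_sphere_def by auto
  have bdd: "bdd_above {\<bar>Y z\<bar> | z. z \<in> UNIV \<and> norm z \<le> 1}"
  proof (rule bdd_aboveI[of _ "\<bar>C\<bar>"])
    fix t assume "t \<in> {\<bar>Y z\<bar> | z. z \<in> UNIV \<and> norm z \<le> 1}"
    then obtain z where z: "t = \<bar>Y z\<bar>" "norm z \<le> 1" by auto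
    have "C * norm z \<le> \<bar>C\<bar>"
      using z(2) by (metis abs_ge_self abs_mult abs_norm_cancel mult.commute mult_left_le mult_nonneg_nonneg norm_ge_zero abs_ge_zero order_trans)
    then show "t \<le> \<bar>C\<bar>" using C[of z] z by linarith
  qed
  have le1: "\<bar>Y z\<bar> \<le> 1" if "norm z \<le> 1" for z
    using cSup_upper[OF _ bdd, of "\<bar>Y z\<bar>"] that S by auto
  show ?thesis
  proof (cases "x = 0")
    case True
    have "Y 0 = 0" using sc[of 0 0] by simp
    then show ?thesis using True by simp
  next
    case False
    have e: "Y x = norm x * Y (sgn x)"
      using sc[of "norm x" "sgn x"] False by (simp add: norm_sgn_scale)
    have "\<bar>Y (sgn x)\<bar> \<le> 1" using le1[of "sgn x"] False by (simp add: norm_sgn)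
    then have "norm x * \<bar>Y (sgn x)\<bar> \<le> norm x * 1"
      by (intro mult_left_mono) auto
    then show ?thesis by (simp add: e abs_mult)
  qed
qed

lemma star_point:
  fixes u1 u2 :: "'b::banach"
  assumes H: "banach_property_star_star TYPE('b)" and n: "norm u1 = 1" "norm u2 = 1" and d: "\<delta> > 0"
  shows "\<exists>Y z w. (\<forall>u v. Y (u + v) = Y u + Y v) \<and> (\<forall>c u. Y (c *\<^sub>R u) = c * Y u) \<and>
     (\<forall>x. \<bar>Y x\<bar> \<le> norm x) \<and> Y u1 > 1 - \<delta> \<and> norm z \<le> 1 \<and> norm w \<le> 1 \<and>
     Y z > 1 - \<delta> \<and> Y w > 1 - \<delta> \<and> norm (u2 - z) + norm (u2 + w) < 2 + \<delta>"
proof -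
  obtain y where y: "y \<in> dual_sphere UNIV (+) (*\<^sub>R) norm" and x1: "u1 \<in> slice UNIV norm y \<delta>"
    and sd: "sdist (+) (*\<^sub>R) norm u2 (slice UNIV norm y \<delta>)
         + sdist (+) (*\<^sub>R) norm u2 ((*\<^sub>R) (-1) ` slice UNIV norm y \<delta>) < 2 + \<delta>"
    using H n d unfolding property_star_star_def by blast
  define S where "S = slice UNIV norm y \<delta>"
  define I1 where "I1 = Inf {norm (u2 + (-1) *\<^sub>R a) | a. a \<in> S}"
  define I2 where "I2 = Inf {norm (u2 + (-1) *\<^sub>R a) | a. a \<in> (*\<^sub>R) (-1) ` S}"
  have sum: "I1 + I2 < 2 + \<delta>" using sd unfolding I1_def I2_def S_def sdist_def by simp
  define e where "e = (2 + \<delta> - I1 - I2) / 2"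
  have e: "e > 0" using sum unfolding e_def by simp
  have u1S: "u1 \<in> S" using x1 S_def by simp
  obtain t1 where t1: "t1 \<in> {norm (u2 + (-1) *\<^sub>R a) | a. a \<in> S}" "t1 < I1 + e"
    using cInf_lessD[of "{norm (u2 + (-1) *\<^sub>R a) | a. a \<in> S}" "I1 + e"] u1S e unfolding I1_def by force
  obtain t2 where t2: "t2 \<in> {norm (u2 + (-1) *\<^sub>R a) | a. a \<in> (*\<^sub>R) (-1) ` S}" "t2 < I2 + e"
    using cInf_lessD[of "{norm (u2 + (-1) *\<^sub>R a) | a. a \<in> (*\<^sub>R) (-1) ` S}" "I2 + e"] u1S e unfolding I2_def by force
  obtain z where z: "z \<in> S" "t1 = norm (u2 - z)" using t1 by auto
  obtain w where w: "w \<in> S" "t2 = norm (u2 + w)" using t2 by auto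
  have lin: "\<forall>u v. y (u + v) = y u + y v" "\<forall>c u. y (c *\<^sub>R u) = c * y u"
    using y unfolding dual_sphere_def by auto
  have fin: "norm (u2 - z) + norm (u2 + w) < 2 + \<delta>"
  proof -
    have "norm (u2 - z) + norm (u2 + w) < I1 + e + (I2 + e)" using t1(2) t2(2) z(2) w(2) by linarith
    also have "\<dots> = 2 + \<delta>" unfolding e_def by simp
    finally show ?thesis .
  qed
  show ?thesis
    apply (rule exI[of _ y], rule exI[of _ z], rule exI[of _ w])
    using fin lin ds_bound[OF y] x1 z w t1 t2 unfolding S_def slice_def e_def by auto
qed

lemma star_point2:
  fixes a b e0 :: "'b::banach"
  assumes H: "banach_property_star_star TYPE('b)" and n: "norm e0 = 1" and d: "\<delta> > 0"
  shows "\<exists>Y z w. (\<forall>u v. Y (u + v) = Y u + Y v) \<and> (\<forall>c u. Y (c *\<^sub>R u) = c * Y u) \<and>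
     (\<forall>x. \<bar>Y x\<bar> \<le> norm x) \<and> Y a \<ge> (1 - \<delta>) * norm a \<and> norm z \<le> 1 \<and> norm w \<le> 1 \<and>
     Y z > 1 - \<delta> \<and> Y w > 1 - \<delta> \<and>
     norm (b - norm b *\<^sub>R z) + norm (b + norm b *\<^sub>R w) \<le> (2 + \<delta>) * norm b"
proof -
  define u1 where "u1 = (if a \<noteq> 0 then sgn a else if b \<noteq> 0 then sgn b else e0)"
  define u2 where "u2 = (if b \<noteq> 0 then sgn b else u1)"
  have nu1: "norm u1 = 1" using n by (simp add: u1_def norm_sgn)
  have nu2: "norm u2 = 1" using nu1 by (simp add: u2_def norm_sgn)
  obtain Y z w where Y: "\<forall>u v. Y (u + v) = Y u + Y v" "\<forall>c u. Y (c *\<^sub>R u) = c * Y u"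
     "\<forall>x. \<bar>Y x\<bar> \<le> norm x" "Y u1 > 1 - \<delta>" "norm z \<le> 1" "norm w \<le> 1"
     "Y z > 1 - \<delta>" "Y w > 1 - \<delta>" "norm (u2 - z) + norm (u2 + w) < 2 + \<delta>"
    using star_point[OF H nu1 nu2 d] by blast
  have Ya: "Y a \<ge> (1 - \<delta>) * norm a"
  proof (cases "a = 0")
    case True
    then show ?thesis using Y(3)[rule_format, of 0] by simp
  next
    case False
    have "Y a = norm a * Y (sgn a)"
      using Y(2)[rule_format, of "norm a" "sgn a"] False by (simp add: norm_sgn_scale)
    moreover have "Y (sgn a) > 1 - \<delta>" using Y(4) False by (simp add: u1_def)
    ultimately show ?thesis using False by (simp add: mult.commute mult_left_mono)
  qed
  have Yb: "norm (b - norm b *\<^sub>R z) + norm (b + norm b *\<^sub>R w) \<le> (2 + \<delta>) * norm b"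
  proof (cases "b = 0")
    case True then show ?thesis by simp
  next
    case False
    have e1: "b - norm b *\<^sub>R z = norm b *\<^sub>R (sgn b - z)"
      using False by (simp add: algebra_simps norm_sgn_scale)
    have e2: "b + norm b *\<^sub>R w = norm b *\<^sub>R (sgn b + w)"
      using False by (simp add: algebra_simps norm_sgn_scale)
    have "norm (b - norm b *\<^sub>R z) + norm (b + norm b *\<^sub>R w) = norm b * (norm (u2 - z) + norm (u2 + w))"
      using False by (simp only: e1 e2 norm_scaleR abs_norm_cancel u2_def if_True distrib_left not_False_eq_True)
    also have "\<dots> \<le> norm b * (2 + \<delta>)" using Y(9) by (intro mult_left_mono) auto
    finally show ?thesis by (simp add: mult.commute)
  qed
  show ?thesis using Y Ya Yb by blast
qed



lemma star_starI:
  assumes addV: "\<forall>u\<in>V. \<forall>v\<in>V. add u v \<in> V" and scalV: "\<forall>u\<in>V. scal (-1) u \<in> V"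
    and scal2: "\<forall>u. scal (-1) (scal (-1) u) = u" and Nnn: "\<forall>u\<in>V. 0 \<le> N u"
    and main: "\<And>x1 x2 \<epsilon>. x1 \<in> V \<Longrightarrow> x2 \<in> V \<Longrightarrow> N x1 = 1 \<Longrightarrow> N x2 = 1 \<Longrightarrow> 0 < \<epsilon> \<Longrightarrow> \<epsilon> < 1 \<Longrightarrow>
      \<exists>y h1 h2. (\<forall>u\<in>V. \<forall>v\<in>V. y (add u v) = y u + y v) \<and> (\<forall>c. \<forall>u\<in>V. y (scal c u) = c * y u) \<and>
        (\<forall>z\<in>V. \<bar>y z\<bar> \<le> N z) \<and> 1 - \<epsilon> < y x1 \<and> h1 \<in> V \<and> h2 \<in> V \<and> N h1 \<le> 1 \<and> N h2 \<le> 1 \<and>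
        1 - \<epsilon> < y h1 \<and> 1 - \<epsilon> < y h2 \<and> N (add x2 (scal (-1) h1)) + N (add x2 h2) < 2 + \<epsilon>"
  shows "property_star_star V add scal N"
  unfolding property_star_star_def
proof (intro ballI impI allI)
  fix x1 x2 and \<epsilon> :: real
  assume x1: "x1 \<in> V" and x2: "x2 \<in> V" and n1: "N x1 = 1" and n2: "N x2 = 1" and e: "\<epsilon> > 0"
  define \<epsilon>' where "\<epsilon>' = min \<epsilon> (1/2)"
  have e': "0 < \<epsilon>'" "\<epsilon>' < 1" "\<epsilon>' \<le> \<epsilon>" using e by (auto simp: \<epsilon>'_def)
  obtain y h1 h2 where ad: "\<forall>u\<in>V. \<forall>v\<in>V. y (add u v) = y u + y v" and sc: "\<forall>c. \<forall>u\<in>V. y (scal c u) = c * y u"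
    and bd: "\<forall>z\<in>V. \<bar>y z\<bar> \<le> N z" and yx1: "1 - \<epsilon>' < y x1" and h: "h1 \<in> V" "h2 \<in> V" "N h1 \<le> 1" "N h2 \<le> 1"
    and yh: "1 - \<epsilon>' < y h1" "1 - \<epsilon>' < y h2" and dist: "N (add x2 (scal (-1) h1)) + N (add x2 h2) < 2 + \<epsilon>'"
    using main[OF x1 x2 n1 n2 e'(1,2)] by blast
  define T where "T = {\<bar>y z\<bar> | z. z \<in> V \<and> N z \<le> 1}"
  define c where "c = Sup T"
  have Tne: "T \<noteq> {}" using x1 n1 by (auto simp: T_def)
  have Tle: "t \<le> 1" if "t \<in> T" for t using that bd by (auto simp: T_def)
  have bddT: "bdd_above T" using Tle by (intro bdd_aboveI[of _ 1]) auto
  have c1: "c \<le> 1" unfolding c_def using Tne Tle by (rule cSup_least)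
  have cx1: "\<bar>y x1\<bar> \<le> c" unfolding c_def using x1 n1 by (intro cSup_upper[OF _ bddT]) (auto simp: T_def)
  have cpos: "c > 0" using cx1 yx1 e' by linarith
  have Tc: "\<bar>y z\<bar> \<le> c" if "z \<in> V" "N z \<le> 1" for z
    unfolding c_def using that by (intro cSup_upper[OF _ bddT]) (auto simp: T_def)
  define y' where "y' z = y z / c" for z
  have y'ge: "y z \<le> y' z" if "y z > 0" for z
  proof -
    have "y z * c \<le> y z * 1" using that c1 by (intro mult_left_mono) auto
    then show ?thesis using cpos by (simp add: y'_def pos_le_divide_eq)
  qed
  have ds: "y' \<in> dual_sphere V add scal N"
    unfolding dual_sphere_def
  proof (intro CollectI conjI)
    show "\<forall>u\<in>V. \<forall>v\<in>V. y' (add u v) = y' u + y' v" using ad by (simp add: y'_def add_divide_distrib)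
    show "\<forall>a. \<forall>u\<in>V. y' (scal a u) = a * y' u" using sc by (simp add: y'_def)
    show "\<exists>C. \<forall>z\<in>V. \<bar>y' z\<bar> \<le> C * N z"
      by (rule exI[of _ "1/c"]) (use bd cpos in \<open>auto simp: y'_def divide_right_mono\<close>)
    show "Sup {\<bar>y' z\<bar> | z. z \<in> V \<and> N z \<le> 1} = 1"
    proof (rule cSup_eq_non_empty)
      show "{\<bar>y' z\<bar> | z. z \<in> V \<and> N z \<le> 1} \<noteq> {}" using x1 n1 by auto
      show "t \<le> 1" if "t \<in> {\<bar>y' z\<bar> | z. z \<in> V \<and> N z \<le> 1}" for t
        using that Tc cpos by (auto simp: y'_def)
      show "1 \<le> B" if B: "\<And>t. t \<in> {\<bar>y' z\<bar> | z. z \<in> V \<and> N z \<le> 1} \<Longrightarrow> t \<le> B" for B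
      proof -
        have "s \<le> B * c" if "s \<in> T" for s
        proof -
          obtain z where z: "s = \<bar>y z\<bar>" "z \<in> V" "N z \<le> 1" using \<open>s \<in> T\<close> by (auto simp: T_def)
          have "\<bar>y z\<bar> / c \<le> B" using B[of "\<bar>y' z\<bar>"] z cpos by (auto simp: y'_def)
          then show ?thesis using z cpos by (simp add: pos_divide_le_eq)
        qed
        then have "c \<le> B * c" unfolding c_def using Tne by (intro cSup_least) auto
        then show ?thesis using cpos by simp
      qed
    qed
  qed
  define S where "S = slice V N y' \<epsilon>"
  have x1S: "x1 \<in> S" using x1 n1 yx1 y'ge[of x1] e' unfolding S_def slice_def by auto
  have h1S: "h1 \<in> S" using h yh y'ge[of h1] e' unfolding S_def slice_def by auto
  have h2S: "h2 \<in> S" using h yh y'ge[of h2] e' unfolding S_def slice_def by auto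
  have SV: "S \<subseteq> V" unfolding S_def slice_def by auto
  have d1: "sdist add scal N x2 S \<le> N (add x2 (scal (-1) h1))"
    unfolding sdist_def
  proof (rule cInf_lower)
    show "N (add x2 (scal (- 1) h1)) \<in> {N (add x2 (scal (- 1) a)) |a. a \<in> S}" using h1S by auto
    show "bdd_below {N (add x2 (scal (- 1) a)) |a. a \<in> S}"
      using SV x2 addV scalV Nnn by (intro bdd_belowI[of _ 0]) blast
  qed
  have d2: "sdist add scal N x2 (scal (-1) ` S) \<le> N (add x2 h2)"
    unfolding sdist_def
  proof (rule cInf_lower)
    show "N (add x2 h2) \<in> {N (add x2 (scal (- 1) a)) |a. a \<in> scal (-1) ` S}"
      using h2S scal2 by (auto intro!: exI[of _ "scal (-1) h2"])
    show "bdd_below {N (add x2 (scal (- 1) a)) |a. a \<in> scal (-1) ` S}"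
      using SV x2 addV scalV Nnn by (intro bdd_belowI[of _ 0]) blast
  qed
  show "\<exists>y\<in>dual_sphere V add scal N. x1 \<in> slice V N y \<epsilon> \<and>
          sdist add scal N x2 (slice V N y \<epsilon>) + sdist add scal N x2 (scal (- 1) ` slice V N y \<epsilon>) < 2 + \<epsilon>"
    apply (rule bexI[OF _ ds])
    using x1S d1 d2 dist e' unfolding S_def by linarith
qed



lemma lin_cont:
  fixes Y :: "'b::real_normed_vector \<Rightarrow> real"
  assumes "\<forall>u v. Y (u + v) = Y u + Y v" "\<forall>c u. Y (c *\<^sub>R u) = c * Y u" "\<forall>x. \<bar>Y x\<bar> \<le> norm x"
  shows "continuous_on UNIV Y"
proof -
  have "bounded_linear Y"
    by (rule bounded_linear_intro[where K=1]) (use assms in auto)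
  then show ?thesis by (rule linear_continuous_on)
qed

lemma simple_param_meas:
  fixes F :: "'c \<Rightarrow> 'a \<Rightarrow> real"
  assumes p: "simple_function M p" and F: "\<And>v. (\<lambda>x. F v x) \<in> borel_measurable M"
  shows "(\<lambda>x. F (p x) x) \<in> borel_measurable M"
proof -
  have fin: "finite (p ` space M)" using p by (simp add: simple_function_def)
  have sets: "p -` {v} \<inter> space M \<in> sets M" for v
    using p by (rule simple_functionD(2))
  have eq: "F (p x) x = (\<Sum>v\<in>p ` space M. indicator (p -` {v} \<inter> space M) x * F v x)" if "x \<in> space M" for x
  proof -
    have "(\<Sum>v\<in>p ` space M. indicator (p -` {v} \<inter> space M) x * F v x) =
          (\<Sum>v\<in>p ` space M. if v = p x then F v x else 0)"
      using that by (intro sum.cong) (auto simp: indicator_def)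
    also have "\<dots> = F (p x) x" using fin that by (simp add: sum.delta')
    finally show ?thesis by simp
  qed
  have "(\<lambda>x. \<Sum>v\<in>p ` space M. indicator (p -` {v} \<inter> space M) x * F v x) \<in> borel_measurable M"
    using sets F by (intro borel_measurable_sum borel_measurable_times borel_measurable_indicator) auto
  then show ?thesis using eq by (subst measurable_cong) auto
qed

lemma sm_norm_meas:
  assumes "complete_measure M" "strongly_measurable M f"
  shows "(\<lambda>x. norm (f x)) \<in> borel_measurable M"
  using sm_comp_meas[OF assms, of norm] by (simp add: continuous_on_norm_id)

lemma sm_diff: "strongly_measurable M f \<Longrightarrow> strongly_measurable M g \<Longrightarrow> strongly_measurable M (\<lambda>x. f x - g x)"
  using sm_add[of M f "\<lambda>x. (-1) *\<^sub>R g x"] sm_scal[of M g "-1"] by simp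

lemma L1_setI:
  assumes "strongly_measurable M f" "integrable M (\<lambda>x. norm (f x))"
  shows "f \<in> L1_set M"
  using assms unfolding L1_set_def integrable_iff_bounded by auto

lemma L1_int:
  assumes "complete_measure M" "f \<in> L1_set M"
  shows "integrable M (\<lambda>x. norm (f x))"
  using assms sm_norm_meas[OF assms(1)] unfolding L1_set_def integrable_iff_bounded by auto

lemma L1_norm_eq:
  assumes "integrable M (\<lambda>x. norm (g x))"
  shows "L1_norm M g = (\<integral>x. norm (g x) \<partial>M)"
  unfolding L1_norm_def using nn_integral_eq_integral[OF assms] by (simp add: integral_nonneg_AE)

lemma L1_add:
  assumes cm: "complete_measure M" and f: "f \<in> L1_set M" and g: "g \<in> L1_set M"
  shows "fun_add f g \<in> L1_set M"
proof -
  have sf: "strongly_measurable M f" "strongly_measurable M g" using f g by (auto simp: L1_set_def)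
  have sm: "strongly_measurable M (fun_add f g)" unfolding fun_add_def by (rule sm_add[OF sf])
  have "integrable M (\<lambda>x. norm (fun_add f g x))"
  proof (rule Bochner_Integration.integrable_bound)
    show "integrable M (\<lambda>x. norm (f x) + norm (g x))" using L1_int[OF cm f] L1_int[OF cm g] by auto
    show "(\<lambda>x. norm (fun_add f g x)) \<in> borel_measurable M" by (rule sm_norm_meas[OF cm sm])
    show "AE x in M. norm (norm (fun_add f g x)) \<le> norm (norm (f x) + norm (g x))"
      by (auto simp: fun_add_def norm_triangle_ineq)
  qed
  then show ?thesis by (rule L1_setI[OF sm])
qed

lemma L1_scal:
  assumes cm: "complete_measure M" and f: "f \<in> L1_set M"
  shows "fun_scal c f \<in> L1_set M"
proof -
  have sm: "strongly_measurable M (fun_scal c f)" unfolding fun_scal_def using f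
    by (intro sm_scal) (auto simp: L1_set_def)
  have "integrable M (\<lambda>x. \<bar>c\<bar> * norm (f x))" using L1_int[OF cm f] by auto
  then have "integrable M (\<lambda>x. norm (fun_scal c f x))" by (simp add: fun_scal_def)
  then show ?thesis by (rule L1_setI[OF sm])
qed

lemma L1_approx:
  fixes f :: "'a \<Rightarrow> 'b::banach"
  assumes cm: "complete_measure M" and f: "f \<in> L1_set M" and eta: "\<eta> > 0"
  shows "\<exists>t. simple_function M t \<and> (\<forall>x. norm (t x) \<le> 2 * norm (f x)) \<and>
     integrable M (\<lambda>x. norm (f x - t x)) \<and> (\<integral>x. norm (f x - t x) \<partial>M) < \<eta>"
proof -
  have smf: "strongly_measurable M f" using f by (auto simp: L1_set_def)
  obtain s where s: "\<And>n. simple_function M (s n)" "AE x in M. (\<lambda>n. s n x) \<longlonglongrightarrow> f x"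
    using smf unfolding strongly_measurable_def by blast
  have mf[measurable]: "(\<lambda>x. norm (f x)) \<in> borel_measurable M" by (rule sm_norm_meas[OF cm smf])
  have ms[measurable]: "(\<lambda>x. norm (s n x)) \<in> borel_measurable M" for n
    by (rule borel_measurable_simple_function) (rule simple_function_compose1[OF s(1)])
  define A where "A n = {x\<in>space M. norm (s n x) \<le> 2 * norm (f x)}" for n
  have A[measurable]: "A n \<in> sets M" for n unfolding A_def by measurable
  define t where "t n x = (if x \<in> A n then s n x else 0)" for n x
  have st: "simple_function M (t n)" for n
    unfolding t_def by (rule simple_function_If_set[OF s(1)]) (use A in auto)
  have tb: "norm (t n x) \<le> 2 * norm (f x)" for n x by (auto simp: t_def A_def)
  have intf: "integrable M (\<lambda>x. norm (f x))" by (rule L1_int[OF cm f])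
  have mu: "(\<lambda>x. norm (f x - t n x)) \<in> borel_measurable M" for n
    by (rule sm_norm_meas[OF cm sm_diff[OF smf sm_simple[OF st]]])
  have bound: "AE x in M. norm (norm (f x - t n x)) \<le> 3 * norm (f x)" for n
  proof (intro AE_I2)
    fix x
    have "norm (f x - t n x) \<le> norm (f x) + norm (t n x)" by (rule norm_triangle_ineq4)
    then show "norm (norm (f x - t n x)) \<le> 3 * norm (f x)" using tb[of n x] by simp
  qed
  have lim: "AE x in M. (\<lambda>n. norm (f x - t n x)) \<longlonglongrightarrow> 0"
    using s(2) AE_space
  proof eventually_elim
    fix x assume l: "(\<lambda>n. s n x) \<longlonglongrightarrow> f x" and x: "x \<in> space M"
    show "(\<lambda>n. norm (f x - t n x)) \<longlonglongrightarrow> 0"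
    proof (cases "f x = 0")
      case True
      then have "t n x = 0" for n using tb[of n x] by simp
      then show ?thesis using True by simp
    next
      case False
      have "(\<lambda>n. norm (s n x)) \<longlonglongrightarrow> norm (f x)" by (rule tendsto_norm[OF l])
      moreover have "norm (f x) < 2 * norm (f x)" using False by simp
      ultimately have ev: "eventually (\<lambda>n. norm (s n x) < 2 * norm (f x)) sequentially"
        by (rule order_tendstoD(2))
      have "eventually (\<lambda>n. norm (f x - s n x) = norm (f x - t n x)) sequentially"
        using ev by eventually_elim (use x in \<open>auto simp: t_def A_def\<close>)
      moreover have "(\<lambda>n. f x - s n x) \<longlonglongrightarrow> 0"
        using tendsto_diff[OF tendsto_const[of "f x"] l] by simp
      then have "(\<lambda>n. norm (f x - s n x)) \<longlonglongrightarrow> 0" by (rule tendsto_norm_zero)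
      ultimately show ?thesis by (rule Lim_transform_eventually[rotated])
    qed
  qed
  have "(\<lambda>n. \<integral>x. norm (f x - t n x) \<partial>M) \<longlonglongrightarrow> (\<integral>x. 0 \<partial>M)"
    by (rule integral_dominated_convergence[where w="\<lambda>x. 3 * norm (f x)"])
       (use mu intf lim bound in auto)
  then have "eventually (\<lambda>n. (\<integral>x. norm (f x - t n x) \<partial>M) < \<eta>) sequentially"
    using eta by (intro order_tendstoD(2)) auto
  then obtain n where n: "(\<integral>x. norm (f x - t n x) \<partial>M) < \<eta>" by (auto simp: eventually_sequentially)
  have "integrable M (\<lambda>x. norm (f x - t n x))"
    by (rule integrable_dominated_convergence2[where w="\<lambda>x. 3 * norm (f x)" and f="\<lambda>x. 0"])
       (use mu intf lim bound in auto)
  then show ?thesis using st tb n by blast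
qed



lemma pt_bound:
  fixes f t z :: "'b::real_normed_vector"
  assumes "norm z \<le> 1" "\<eta> \<ge> 0" "r \<ge> 0"
  shows "norm (f - (r / (1 + \<eta>)) *\<^sub>R z) \<le> norm (f - t) + norm (t - r *\<^sub>R z) + \<eta> * r"
proof -
  have e: "f - (r / (1 + \<eta>)) *\<^sub>R z = (f - t) + (t - r *\<^sub>R z) + (r - r / (1 + \<eta>)) *\<^sub>R z"
    by (simp add: algebra_simps)
  have c: "r - r / (1 + \<eta>) = \<eta> * r / (1 + \<eta>)" using assms by (simp add: field_simps)
  have c2: "\<eta> * r / (1 + \<eta>) \<le> \<eta> * r" using assms
    frac_le[of "\<eta> * r" "\<eta> * r" 1 "1 + \<eta>"] by simp
  have "norm ((r - r / (1 + \<eta>)) *\<^sub>R z) \<le> \<eta> * r"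
  proof -
    have "norm ((r - r / (1 + \<eta>)) *\<^sub>R z) = \<bar>\<eta> * r / (1 + \<eta>)\<bar> * norm z" by (simp add: c)
    also have "\<dots> \<le> \<bar>\<eta> * r / (1 + \<eta>)\<bar> * 1" using assms(1) by (intro mult_left_mono) auto
    also have "\<dots> \<le> \<eta> * r" using c2 assms by simp
    finally show ?thesis .
  qed
  then show ?thesis unfolding e
    by (metis (no_types, lifting) add_mono norm_triangle_ineq order_trans order_refl)
qed

lemma choice3:
  assumes "\<forall>a b. \<exists>Y z w. P a b Y z w"
  shows "\<exists>YY zz ww. \<forall>a b. P a b (YY a b) (zz a b) (ww a b)"
proof -
  define F where "F a b = (SOME q. P a b (fst q) (fst (snd q)) (snd (snd q)))" for a b
  have "P a b (fst (F a b)) (fst (snd (F a b))) (snd (snd (F a b)))" for a b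
  proof -
    obtain Y z w where "P a b Y z w" using assms by blast
    then show ?thesis unfolding F_def
      using someI[of "\<lambda>q. P a b (fst q) (fst (snd q)) (snd (snd q))" "(Y, z, w)"] by simp
  qed
  then show ?thesis
    by (intro exI[of _ "\<lambda>a b. fst (F a b)"] exI[of _ "\<lambda>a b. fst (snd (F a b))"]
        exI[of _ "\<lambda>a b. snd (snd (F a b))"]) simp
qed

lemma nt1: "norm a - norm (a - b) \<le> norm (b::'b::real_normed_vector)"
  using norm_triangle_ineq2[of a "a - b"] by simp

lemma nt2: "norm (b::'b::real_normed_vector) \<le> norm a + norm (a - b)"
  using norm_triangle_ineq4[of a "a - b"] by simp

lemma arithA1:
  fixes \<eta> d T :: real
  assumes "0 < \<eta>" "\<eta> < 1/20" "0 \<le> d" "d < \<eta>" "T \<ge> 1 - d"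
  shows "(1 - \<eta>) * T - d > 1 - 20 * \<eta>"
proof -
  have "(1 - \<eta>) * T \<ge> (1 - \<eta>) * (1 - d)" using assms by (intro mult_left_mono) auto
  moreover have "(1 - \<eta>) * (1 - d) = 1 - \<eta> - d + \<eta> * d" by (simp add: algebra_simps)
  moreover have "\<eta> * d \<ge> 0" using assms by simp
  ultimately show ?thesis using assms by linarith
qed

lemma arithA2:
  fixes \<eta> d T :: real
  assumes "0 < \<eta>" "\<eta> < 1/20" "0 \<le> d" "d < \<eta>" "T \<ge> 1 - d"
  shows "(1 - \<eta>) / (1 + \<eta>) * T > 1 - 20 * \<eta>"
proof -
  have p: "(1 - \<eta>) / (1 + \<eta>) > 0" using assms by simp
  have "(1 - \<eta>) / (1 + \<eta>) * T \<ge> (1 - \<eta>) / (1 + \<eta>) * (1 - d)" using assms p by (intro mult_left_mono) auto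
  moreover have "(1 - \<eta>) / (1 + \<eta>) * (1 - d) > (1 - \<eta>) / (1 + \<eta>) * (1 - \<eta>)"
    using assms p by (intro mult_strict_left_mono) auto
  moreover have "(1 - \<eta>) / (1 + \<eta>) * (1 - \<eta>) \<ge> 1 - 20 * \<eta>"
  proof -
    have "(1 - 20 * \<eta>) * (1 + \<eta>) \<le> (1 - \<eta>) * (1 - \<eta>)"
      using assms by (simp add: algebra_simps)
    then show ?thesis using assms by (simp add: pos_le_divide_eq)
  qed
  ultimately show ?thesis by linarith
qed

lemma arithA3:
  fixes \<eta> d T :: real
  assumes "0 < \<eta>" "\<eta> < 1/20" "0 \<le> d" "d < \<eta>" "T \<le> 1 + d"
  shows "2 * d + (2 + 3 * \<eta>) * T < 2 + 20 * \<eta>"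
proof -
  have "(2 + 3 * \<eta>) * T \<le> (2 + 3 * \<eta>) * (1 + d)" using assms by (intro mult_left_mono) auto
  moreover have "(2 + 3 * \<eta>) * (1 + d) = 2 + 3 * \<eta> + 2 * d + 3 * (\<eta> * d)" by (simp add: algebra_simps)
  moreover have "\<eta> * d \<le> \<eta> * \<eta>" using assms by (intro mult_left_mono) auto
  moreover have "\<eta> * \<eta> \<le> \<eta> * (1/20)" using assms by (intro mult_left_mono) auto
  ultimately show ?thesis using assms by linarith
qed

lemma L1_main:
  fixes M :: "'a measure" and f1 f2 :: "'a \<Rightarrow> 'b::banach"
  assumes cm: "complete_measure M" and H: "banach_property_star_star TYPE('b)"
    and f1: "f1 \<in> L1_set M" and f2: "f2 \<in> L1_set M" and n1: "L1_norm M f1 = 1" and n2: "L1_norm M f2 = 1"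
    and e: "0 < \<epsilon>" "\<epsilon> < 1"
  shows "\<exists>y h1 h2. (\<forall>u\<in>L1_set M. \<forall>v\<in>L1_set M. y (fun_add u v) = y u + y v) \<and>
        (\<forall>c. \<forall>u\<in>L1_set M. y (fun_scal c u) = c * y u) \<and>
        (\<forall>z\<in>L1_set M. \<bar>y z\<bar> \<le> L1_norm M z) \<and> 1 - \<epsilon> < y f1 \<and> h1 \<in> L1_set M \<and> h2 \<in> L1_set M \<and>
        L1_norm M h1 \<le> 1 \<and> L1_norm M h2 \<le> 1 \<and> 1 - \<epsilon> < y h1 \<and> 1 - \<epsilon> < y h2 \<and>
        L1_norm M (fun_add f2 (fun_scal (-1) h1)) + L1_norm M (fun_add f2 h2) < 2 + \<epsilon>"
proof -
  have i1: "integrable M (\<lambda>x. norm (f1 x))" by (rule L1_int[OF cm f1])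
  have i2: "integrable M (\<lambda>x. norm (f2 x))" by (rule L1_int[OF cm f2])
  have I1: "(\<integral>x. norm (f1 x) \<partial>M) = 1" using n1 L1_norm_eq[OF i1] by simp
  have I2: "(\<integral>x. norm (f2 x) \<partial>M) = 1" using n2 L1_norm_eq[OF i2] by simp
  obtain x0 where x0: "f1 x0 \<noteq> 0"
  proof (rule ccontr)
    assume "\<not> thesis"
    then have "\<And>x. f1 x = 0" using that by blast
    then show False using I1 by simp
  qed
  have ne0: "norm (sgn (f1 x0)) = 1" using x0 by (simp add: norm_sgn)
  define \<eta> where "\<eta> = \<epsilon> / 20"
  have eta: "0 < \<eta>" "\<eta> < 1/20" using e by (auto simp: \<eta>_def)
  have "\<forall>(a::'b) (b::'b). \<exists>Y z w. (\<forall>u v. Y (u + v) = Y u + Y v) \<and> (\<forall>c u. Y (c *\<^sub>R u) = c * Y u) \<and>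
     (\<forall>x. \<bar>Y x\<bar> \<le> norm x) \<and> Y a \<ge> (1 - \<eta>) * norm a \<and> norm z \<le> 1 \<and> norm w \<le> 1 \<and>
     Y z > 1 - \<eta> \<and> Y w > 1 - \<eta> \<and>
     norm (b - norm b *\<^sub>R z) + norm (b + norm b *\<^sub>R w) \<le> (2 + \<eta>) * norm b"
    using star_point2[OF H ne0 eta(1)] by blast
  from choice3[OF this] obtain YY zz ww where G: "\<forall>(a::'b) (b::'b). (\<forall>u v. YY a b (u + v) = YY a b u + YY a b v) \<and> (\<forall>c u. YY a b (c *\<^sub>R u) = c * YY a b u) \<and>
     (\<forall>x. \<bar>YY a b x\<bar> \<le> norm x) \<and> YY a b a \<ge> (1 - \<eta>) * norm a \<and> norm (zz a b) \<le> 1 \<and> norm (ww a b) \<le> 1 \<and>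
     YY a b (zz a b) > 1 - \<eta> \<and> YY a b (ww a b) > 1 - \<eta> \<and>
     norm (b - norm b *\<^sub>R zz a b) + norm (b + norm b *\<^sub>R ww a b) \<le> (2 + \<eta>) * norm b"
    by (elim exE) blast
  obtain t1 where t1: "simple_function M t1" "\<forall>x. norm (t1 x) \<le> 2 * norm (f1 x)"
     "integrable M (\<lambda>x. norm (f1 x - t1 x))" "(\<integral>x. norm (f1 x - t1 x) \<partial>M) < \<eta>"
    using L1_approx[OF cm f1 eta(1)] by blast
  obtain t2 where t2: "simple_function M t2" "\<forall>x. norm (t2 x) \<le> 2 * norm (f2 x)"
     "integrable M (\<lambda>x. norm (f2 x - t2 x))" "(\<integral>x. norm (f2 x - t2 x) \<partial>M) < \<eta>"
    using L1_approx[OF cm f2 eta(1)] by blast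
  define Yp where "Yp x = YY (t1 x) (t2 x)" for x
  define Zp where "Zp x = zz (t1 x) (t2 x)" for x
  define Wp where "Wp x = ww (t1 x) (t2 x)" for x
  have Yadd: "Yp x (u + v) = Yp x u + Yp x v" for x u v using G by (simp add: Yp_def)
  have Ysc: "Yp x (c *\<^sub>R u) = c * Yp x u" for x c u using G by (simp add: Yp_def)
  have Ybd: "\<bar>Yp x u\<bar> \<le> norm u" for x u using G by (simp add: Yp_def)
  have Yt1: "Yp x (t1 x) \<ge> (1 - \<eta>) * norm (t1 x)" for x using G by (simp add: Yp_def)
  have Zn: "norm (Zp x) \<le> 1" "norm (Wp x) \<le> 1" for x using G by (auto simp: Zp_def Wp_def)
  have YZ: "Yp x (Zp x) > 1 - \<eta>" "Yp x (Wp x) > 1 - \<eta>" for x using G by (auto simp: Yp_def Zp_def Wp_def)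
  have Ydist: "norm (t2 x - norm (t2 x) *\<^sub>R Zp x) + norm (t2 x + norm (t2 x) *\<^sub>R Wp x) \<le> (2 + \<eta>) * norm (t2 x)" for x
    using G by (simp add: Zp_def Wp_def)
  have Ycont: "continuous_on UNIV (YY a b)" for a b
    by (rule lin_cont) (use G in blast)+
  have p: "simple_function M (\<lambda>x. (t1 x, t2 x))" using t1(1) t2(1) by (rule simple_function_Pair)
  have Ymeas: "(\<lambda>x. Yp x (h x)) \<in> borel_measurable M" if "strongly_measurable M h" for h
  proof -
    have "(\<lambda>x. YY (fst (t1 x, t2 x)) (snd (t1 x, t2 x)) (h x)) \<in> borel_measurable M"
      by (rule simple_param_meas[OF p, of "\<lambda>v x. YY (fst v) (snd v) (h x)"])
         (rule sm_comp_meas[OF cm that Ycont])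
    then show ?thesis by (simp add: Yp_def)
  qed
  have Yint: "integrable M (\<lambda>x. Yp x (h x))" if "h \<in> L1_set M" for h
  proof (rule Bochner_Integration.integrable_bound)
    show "integrable M (\<lambda>x. norm (h x))" by (rule L1_int[OF cm that])
    show "(\<lambda>x. Yp x (h x)) \<in> borel_measurable M" using that by (intro Ymeas) (auto simp: L1_set_def)
    show "AE x in M. norm (Yp x (h x)) \<le> norm (norm (h x))" using Ybd by auto
  qed
  define y where "y h = (\<integral>x. Yp x (h x) \<partial>M)" for h
  have yadd: "\<forall>u\<in>(L1_set M :: ('a \<Rightarrow> 'b) set). \<forall>v\<in>L1_set M. y (fun_add u v) = y u + y v"
    using Yint by (simp add: y_def fun_add_def Yadd)
  have ysc: "\<forall>c. \<forall>u\<in>(L1_set M :: ('a \<Rightarrow> 'b) set). y (fun_scal c u) = c * y u"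
    by (simp add: y_def fun_scal_def Ysc)
  have ybd: "\<forall>z\<in>(L1_set M :: ('a \<Rightarrow> 'b) set). \<bar>y z\<bar> \<le> L1_norm M z"
  proof
    fix z :: "'a \<Rightarrow> 'b" assume z: "z \<in> L1_set M"
    have iz: "integrable M (\<lambda>x. norm (z x))" by (rule L1_int[OF cm z])
    have "y z \<le> (\<integral>x. norm (z x) \<partial>M)" unfolding y_def
      using Ybd by (intro integral_mono Yint z iz) (metis abs_le_D1)
    moreover have "- y z \<le> (\<integral>x. norm (z x) \<partial>M)"
    proof -
      have "(\<integral>x. - Yp x (z x) \<partial>M) \<le> (\<integral>x. norm (z x) \<partial>M)"
        using Ybd by (intro integral_mono integrable_minus Yint z iz) (metis abs_le_D2)
      then show ?thesis by (simp add: y_def)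
    qed
    ultimately show "\<bar>y z\<bar> \<le> L1_norm M z" using L1_norm_eq[OF iz] by simp
  qed
  have mt1: "(\<lambda>x. norm (t1 x)) \<in> borel_measurable M"
    by (rule borel_measurable_simple_function[OF simple_function_compose1[OF t1(1)]])
  have mt2: "(\<lambda>x. norm (t2 x)) \<in> borel_measurable M"
    by (rule borel_measurable_simple_function[OF simple_function_compose1[OF t2(1)]])
  have it1: "integrable M (\<lambda>x. norm (t1 x))"
    by (rule Bochner_Integration.integrable_bound[where f="\<lambda>x. 2 * norm (f1 x)"]) (use i1 mt1 t1(2) in auto)
  have it2: "integrable M (\<lambda>x. norm (t2 x))"
    by (rule Bochner_Integration.integrable_bound[where f="\<lambda>x. 2 * norm (f2 x)"]) (use i2 mt2 t2(2) in auto)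
  define d1 where "d1 = (\<integral>x. norm (f1 x - t1 x) \<partial>M)"
  define d2 where "d2 = (\<integral>x. norm (f2 x - t2 x) \<partial>M)"
  have d1: "0 \<le> d1" "d1 < \<eta>" using t1(4) by (auto simp: d1_def intro: integral_nonneg_AE)
  have d2: "0 \<le> d2" "d2 < \<eta>" using t2(4) by (auto simp: d2_def intro: integral_nonneg_AE)
  have T1ge: "(\<integral>x. norm (t1 x) \<partial>M) \<ge> 1 - d1"
  proof -
    have "(\<integral>x. norm (f1 x) - norm (f1 x - t1 x) \<partial>M) \<le> (\<integral>x. norm (t1 x) \<partial>M)"
      using i1 t1(3) it1 by (intro integral_mono) (auto simp: nt1)
    then show ?thesis using i1 t1(3) I1 by (simp add: d1_def)
  qed
  have T2ge: "(\<integral>x. norm (t2 x) \<partial>M) \<ge> 1 - d2"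
  proof -
    have "(\<integral>x. norm (f2 x) - norm (f2 x - t2 x) \<partial>M) \<le> (\<integral>x. norm (t2 x) \<partial>M)"
      using i2 t2(3) it2 by (intro integral_mono) (auto simp: nt1)
    then show ?thesis using i2 t2(3) I2 by (simp add: d2_def)
  qed
  have T2le: "(\<integral>x. norm (t2 x) \<partial>M) \<le> 1 + d2"
  proof -
    have "(\<integral>x. norm (t2 x) \<partial>M) \<le> (\<integral>x. norm (f2 x) + norm (f2 x - t2 x) \<partial>M)"
      using i2 t2(3) it2 by (intro integral_mono) (auto simp: nt2)
    then show ?thesis using i2 t2(3) I2 by (simp add: d2_def)
  qed
  have yf1: "1 - \<epsilon> < y f1"
  proof -
    have "(\<integral>x. (1 - \<eta>) * norm (t1 x) - norm (f1 x - t1 x) \<partial>M) \<le> y f1"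
      unfolding y_def
    proof (intro integral_mono)
      show "integrable M (\<lambda>x. (1 - \<eta>) * norm (t1 x) - norm (f1 x - t1 x))" using it1 t1(3) by auto
      show "integrable M (\<lambda>x. Yp x (f1 x))" by (rule Yint[OF f1])
      fix x
      have "Yp x (f1 x) = Yp x (t1 x) + Yp x (f1 x - t1 x)" using Yadd[of x "t1 x" "f1 x - t1 x"] by simp
      moreover have "- norm (f1 x - t1 x) \<le> Yp x (f1 x - t1 x)" using Ybd[of x "f1 x - t1 x"] by linarith
      ultimately show "(1 - \<eta>) * norm (t1 x) - norm (f1 x - t1 x) \<le> Yp x (f1 x)" using Yt1[of x] by linarith
    qed
    also have "(\<integral>x. (1 - \<eta>) * norm (t1 x) - norm (f1 x - t1 x) \<partial>M) = (1 - \<eta>) * (\<integral>x. norm (t1 x) \<partial>M) - d1"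
      using it1 t1(3) by (simp add: d1_def)
    finally show ?thesis using arithA1[OF eta d1 T1ge] by (simp add: \<eta>_def)
  qed
  define h1 where "h1 x = (norm (t2 x) / (1 + \<eta>)) *\<^sub>R Zp x" for x
  define h2 where "h2 x = (norm (t2 x) / (1 + \<eta>)) *\<^sub>R Wp x" for x
  have sh1: "simple_function M h1"
    using simple_function_compose2[OF t1(1) t2(1), of "\<lambda>a b. (norm b / (1 + \<eta>)) *\<^sub>R zz a b"]
    unfolding h1_def[abs_def] Zp_def by simp
  have sh2: "simple_function M h2"
    using simple_function_compose2[OF t1(1) t2(1), of "\<lambda>a b. (norm b / (1 + \<eta>)) *\<^sub>R ww a b"]
    unfolding h2_def[abs_def] Wp_def by simp
  have nh: "norm (h1 x) \<le> norm (t2 x) / (1 + \<eta>)" "norm (h2 x) \<le> norm (t2 x) / (1 + \<eta>)" for x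
  proof -
    have "norm (t2 x) / (1 + \<eta>) * norm (Zp x) \<le> norm (t2 x) / (1 + \<eta>) * 1"
      using Zn[of x] eta by (intro mult_left_mono) auto
    then show "norm (h1 x) \<le> norm (t2 x) / (1 + \<eta>)" using eta by (simp add: h1_def)
    have "norm (t2 x) / (1 + \<eta>) * norm (Wp x) \<le> norm (t2 x) / (1 + \<eta>) * 1"
      using Zn[of x] eta by (intro mult_left_mono) auto
    then show "norm (h2 x) \<le> norm (t2 x) / (1 + \<eta>)" using eta by (simp add: h2_def)
  qed
  have ih1: "integrable M (\<lambda>x. norm (h1 x))"
    by (rule Bochner_Integration.integrable_bound[where f="\<lambda>x. norm (t2 x) / (1 + \<eta>)"])
       (use it2 nh eta in \<open>auto intro!: borel_measurable_simple_function[OF simple_function_compose1[OF sh1]]\<close>)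
  have ih2: "integrable M (\<lambda>x. norm (h2 x))"
    by (rule Bochner_Integration.integrable_bound[where f="\<lambda>x. norm (t2 x) / (1 + \<eta>)"])
       (use it2 nh eta in \<open>auto intro!: borel_measurable_simple_function[OF simple_function_compose1[OF sh2]]\<close>)
  have h1V: "h1 \<in> L1_set M" by (rule L1_setI[OF sm_simple[OF sh1] ih1])
  have h2V: "h2 \<in> L1_set M" by (rule L1_setI[OF sm_simple[OF sh2] ih2])
  have Nh: "L1_norm M h1 \<le> 1" "L1_norm M h2 \<le> 1"
  proof -
    have le: "(\<integral>x. norm (t2 x) / (1 + \<eta>) \<partial>M) \<le> 1"
      using T2le d2 eta by (simp add: divide_le_eq)
    show "L1_norm M h1 \<le> 1" unfolding L1_norm_eq[OF ih1]
      using it2 ih1 nh by (intro order_trans[OF integral_mono le]) auto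
    show "L1_norm M h2 \<le> 1" unfolding L1_norm_eq[OF ih2]
      using it2 ih2 nh by (intro order_trans[OF integral_mono le]) auto
  qed
  have yh: "1 - \<epsilon> < y h1" "1 - \<epsilon> < y h2"
  proof -
    have lb: "(1 - \<eta>) / (1 + \<eta>) * (\<integral>x. norm (t2 x) \<partial>M) > 1 - \<epsilon>"
      using arithA2[OF eta d2 T2ge] by (simp add: \<eta>_def)
    have eq: "(\<integral>x. (1 - \<eta>) / (1 + \<eta>) * norm (t2 x) \<partial>M) = (1 - \<eta>) / (1 + \<eta>) * (\<integral>x. norm (t2 x) \<partial>M)"
      by simp
    have "(\<integral>x. (1 - \<eta>) / (1 + \<eta>) * norm (t2 x) \<partial>M) \<le> y h1"
      unfolding y_def
    proof (intro integral_mono)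
      show "integrable M (\<lambda>x. (1 - \<eta>) / (1 + \<eta>) * norm (t2 x))" using it2 by auto
      show "integrable M (\<lambda>x. Yp x (h1 x))" by (rule Yint[OF h1V])
      fix x
      have "norm (t2 x) / (1 + \<eta>) * (1 - \<eta>) \<le> norm (t2 x) / (1 + \<eta>) * Yp x (Zp x)"
        using YZ(1)[of x] eta by (intro mult_left_mono) auto
      then show "(1 - \<eta>) / (1 + \<eta>) * norm (t2 x) \<le> Yp x (h1 x)" by (simp add: h1_def Ysc mult.commute)
    qed
    then show "1 - \<epsilon> < y h1" using lb eq by linarith
    have "(\<integral>x. (1 - \<eta>) / (1 + \<eta>) * norm (t2 x) \<partial>M) \<le> y h2"
      unfolding y_def
    proof (intro integral_mono)
      show "integrable M (\<lambda>x. (1 - \<eta>) / (1 + \<eta>) * norm (t2 x))" using it2 by auto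
      show "integrable M (\<lambda>x. Yp x (h2 x))" by (rule Yint[OF h2V])
      fix x
      have "norm (t2 x) / (1 + \<eta>) * (1 - \<eta>) \<le> norm (t2 x) / (1 + \<eta>) * Yp x (Wp x)"
        using YZ(2)[of x] eta by (intro mult_left_mono) auto
      then show "(1 - \<eta>) / (1 + \<eta>) * norm (t2 x) \<le> Yp x (h2 x)" by (simp add: h2_def Ysc mult.commute)
    qed
    then show "1 - \<epsilon> < y h2" using lb eq by linarith
  qed
  have g1V: "fun_add f2 (fun_scal (-1) h1) \<in> L1_set M" by (intro L1_add[OF cm f2] L1_scal[OF cm h1V])
  have g2V: "fun_add f2 h2 \<in> L1_set M" by (intro L1_add[OF cm f2 h2V])
  have ig1: "integrable M (\<lambda>x. norm (f2 x - h1 x))"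
    using L1_int[OF cm g1V] by (simp add: fun_add_def fun_scal_def)
  have ig2: "integrable M (\<lambda>x. norm (f2 x + h2 x))"
    using L1_int[OF cm g2V] by (simp add: fun_add_def)
  have Ng1: "L1_norm M (fun_add f2 (fun_scal (-1) h1)) = (\<integral>x. norm (f2 x - h1 x) \<partial>M)"
    using L1_norm_eq[OF L1_int[OF cm g1V]] by (simp add: fun_add_def fun_scal_def)
  have Ng2: "L1_norm M (fun_add f2 h2) = (\<integral>x. norm (f2 x + h2 x) \<partial>M)"
    using L1_norm_eq[OF L1_int[OF cm g2V]] by (simp add: fun_add_def)
  have dist: "(\<integral>x. norm (f2 x - h1 x) \<partial>M) + (\<integral>x. norm (f2 x + h2 x) \<partial>M) < 2 + \<epsilon>"
  proof -
    have "(\<integral>x. norm (f2 x - h1 x) \<partial>M) + (\<integral>x. norm (f2 x + h2 x) \<partial>M)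
        = (\<integral>x. norm (f2 x - h1 x) + norm (f2 x + h2 x) \<partial>M)" using ig1 ig2 by simp
    also have "\<dots> \<le> (\<integral>x. 2 * norm (f2 x - t2 x) + (2 + 3 * \<eta>) * norm (t2 x) \<partial>M)"
    proof (intro integral_mono)
      show "integrable M (\<lambda>x. norm (f2 x - h1 x) + norm (f2 x + h2 x))" using ig1 ig2 by auto
      show "integrable M (\<lambda>x. 2 * norm (f2 x - t2 x) + (2 + 3 * \<eta>) * norm (t2 x))" using t2(3) it2 by auto
      fix x
      have a: "norm (f2 x - h1 x) \<le> norm (f2 x - t2 x) + norm (t2 x - norm (t2 x) *\<^sub>R Zp x) + \<eta> * norm (t2 x)"
        unfolding h1_def by (rule pt_bound) (use Zn eta in auto)
      have b: "norm (f2 x + h2 x) \<le> norm (f2 x - t2 x) + norm (t2 x + norm (t2 x) *\<^sub>R Wp x) + \<eta> * norm (t2 x)"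
        using pt_bound[of "- Wp x" \<eta> "norm (t2 x)" "f2 x" "t2 x"] Zn eta by (simp add: h2_def)
      show "norm (f2 x - h1 x) + norm (f2 x + h2 x) \<le> 2 * norm (f2 x - t2 x) + (2 + 3 * \<eta>) * norm (t2 x)"
        using a b Ydist[of x] by (simp add: algebra_simps)
    qed
    also have "\<dots> = 2 * d2 + (2 + 3 * \<eta>) * (\<integral>x. norm (t2 x) \<partial>M)" using t2(3) it2 by (simp add: d2_def)
    also have "\<dots> < 2 + \<epsilon>" using arithA3[OF eta d2 T2le] by (simp add: \<eta>_def)
    finally show ?thesis .
  qed
  show ?thesis
    apply (rule exI[of _ y], rule exI[of _ h1], rule exI[of _ h2])
    using yadd ysc ybd yf1 h1V h2V Nh yh dist Ng1 Ng2 by simp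
qed

lemma L1_star:
  fixes M :: "'a measure"
  assumes cm: "complete_measure M" and H: "banach_property_star_star TYPE('b::banach)"
  shows "property_star_star (L1_set M :: ('a \<Rightarrow> 'b) set) fun_add fun_scal (L1_norm M)"
proof (rule star_starI)
  show "\<forall>u\<in>(L1_set M :: ('a \<Rightarrow> 'b) set). \<forall>v\<in>L1_set M. fun_add u v \<in> L1_set M"
    using L1_add[OF cm] by blast
  show "\<forall>u\<in>(L1_set M :: ('a \<Rightarrow> 'b) set). fun_scal (-1) u \<in> L1_set M"
    using L1_scal[OF cm] by blast
  show "\<forall>u::'a \<Rightarrow> 'b. fun_scal (-1) (fun_scal (-1) u) = u" by (simp add: fun_scal_def)
  show "\<forall>u\<in>(L1_set M :: ('a \<Rightarrow> 'b) set). 0 \<le> L1_norm M u" by (simp add: L1_norm_def)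
  show "\<exists>y h1 h2. (\<forall>u\<in>L1_set M. \<forall>v\<in>L1_set M. y (fun_add u v) = y u + y v) \<and>
        (\<forall>c. \<forall>u\<in>L1_set M. y (fun_scal c u) = c * y u) \<and>
        (\<forall>z\<in>L1_set M. \<bar>y z\<bar> \<le> L1_norm M z) \<and> 1 - \<epsilon> < y x1 \<and> h1 \<in> L1_set M \<and> h2 \<in> L1_set M \<and>
        L1_norm M h1 \<le> 1 \<and> L1_norm M h2 \<le> 1 \<and> 1 - \<epsilon> < y h1 \<and> 1 - \<epsilon> < y h2 \<and>
        L1_norm M (fun_add x2 (fun_scal (-1) h1)) + L1_norm M (fun_add x2 h2) < 2 + \<epsilon>"
    if "x1 \<in> L1_set M" "x2 \<in> L1_set M" "L1_norm M x1 = 1" "L1_norm M x2 = 1" "0 < \<epsilon>" "\<epsilon> < 1"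
    for x1 x2 :: "'a \<Rightarrow> 'b" and \<epsilon>
    by (rule L1_main[OF cm H that])
qed



lemma Linf_ne:
  assumes "f \<in> Linf_set M"
  shows "{C. 0 \<le> C \<and> (AE x in M. norm (f x) \<le> C)} \<noteq> {}"
proof -
  obtain C where "AE x in M. norm (f x) \<le> C" using assms by (auto simp: Linf_set_def)
  then have "AE x in M. norm (f x) \<le> max C 0" by eventually_elim auto
  then show ?thesis by (intro ex_in_conv[THEN iffD1] exI[of _ "max C 0"]) auto
qed

lemma Linf_norm_nonneg: "f \<in> Linf_set M \<Longrightarrow> 0 \<le> Linf_norm M f"
  unfolding Linf_norm_def by (rule cInf_greatest[OF Linf_ne]) auto

lemma Linf_norm_le:
  assumes "0 \<le> C" "AE x in M. norm (f x) \<le> C"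
  shows "Linf_norm M f \<le> C"
  unfolding Linf_norm_def by (rule cInf_lower) (use assms in \<open>auto intro: bdd_belowI[of _ 0]\<close>)

lemma Linf_norm_AE:
  assumes f: "f \<in> Linf_set M"
  shows "AE x in M. norm (f x) \<le> Linf_norm M f"
proof -
  define K where "K = {C. 0 \<le> C \<and> (AE x in M. norm (f x) \<le> C)}"
  have Kne: "K \<noteq> {}" using Linf_ne[OF f] by (simp add: K_def)
  have "\<forall>n::nat. \<exists>C. C \<in> K \<and> C < Inf K + inverse (real (Suc n))"
  proof
    fix n :: nat
    have "Inf K < Inf K + inverse (real (Suc n))" by simp
    then show "\<exists>C. C \<in> K \<and> C < Inf K + inverse (real (Suc n))"
      using cInf_lessD[OF Kne] by blast
  qed
  then obtain C where C: "\<And>n. C n \<in> K" "\<And>n. C n < Inf K + inverse (real (Suc n))" by metis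
  have "AE x in M. \<forall>n. norm (f x) \<le> C n"
    unfolding AE_all_countable using C(1) by (auto simp: K_def)
  then show ?thesis
  proof eventually_elim
    fix x assume a: "\<forall>n. norm (f x) \<le> C n"
    show "norm (f x) \<le> Linf_norm M f" unfolding Linf_norm_def K_def[symmetric]
    proof (rule field_le_epsilon)
      fix e :: real assume "0 < e"
      then obtain n where "inverse (real (Suc n)) < e" using reals_Archimedean by blast
      then show "norm (f x) \<le> Inf K + e" using a[rule_format, of n] C(2)[of n] by linarith
    qed
  qed
qed

lemma Linf_setI: "strongly_measurable M f \<Longrightarrow> AE x in M. norm (f x) \<le> C \<Longrightarrow> f \<in> Linf_set M"
  unfolding Linf_set_def by auto

lemma Linf_add:
  assumes f: "f \<in> Linf_set M" and g: "g \<in> Linf_set M"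
  shows "fun_add f g \<in> Linf_set M"
proof -
  have sm: "strongly_measurable M (fun_add f g)" unfolding fun_add_def
    using f g by (intro sm_add) (auto simp: Linf_set_def)
  have "AE x in M. norm (fun_add f g x) \<le> Linf_norm M f + Linf_norm M g"
    using Linf_norm_AE[OF f] Linf_norm_AE[OF g]
    by eventually_elim (auto simp: fun_add_def intro: order_trans[OF norm_triangle_ineq])
  then show ?thesis by (rule Linf_setI[OF sm])
qed

lemma Linf_scal:
  assumes f: "f \<in> Linf_set M"
  shows "fun_scal c f \<in> Linf_set M"
proof -
  have sm: "strongly_measurable M (fun_scal c f)" unfolding fun_scal_def
    using f by (intro sm_scal) (auto simp: Linf_set_def)
  have "AE x in M. norm (fun_scal c f x) \<le> \<bar>c\<bar> * Linf_norm M f"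
    using Linf_norm_AE[OF f] by eventually_elim (auto simp: fun_scal_def intro: mult_left_mono)
  then show ?thesis by (rule Linf_setI[OF sm])
qed

lemma ae_ex_in:
  assumes "A \<in> sets M" "emeasure M A \<noteq> 0" "AE x in M. P x"
  shows "\<exists>x\<in>A. P x"
proof (rule ccontr)
  assume "\<not> (\<exists>x\<in>A. P x)"
  obtain N where N: "{x\<in>space M. \<not> P x} \<subseteq> N" "N \<in> sets M" "emeasure M N = 0"
    using assms(3) by (auto elim: AE_E)
  have "A \<subseteq> N" using N(1) \<open>\<not> (\<exists>x\<in>A. P x)\<close> sets.sets_into_space[OF assms(1)] by auto
  then have "emeasure M A \<le> emeasure M N" using N(2) by (rule emeasure_mono)
  then show False using N(3) assms(2) by simp
qed

lemma near_bound:
  fixes x2 z :: "'b::real_normed_vector"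
  assumes "norm z \<le> 1"
  shows "norm (x2 - z) \<le> norm (x2 - norm x2 *\<^sub>R z) + \<bar>1 - norm x2\<bar>"
proof -
  have e: "x2 - z = (x2 - norm x2 *\<^sub>R z) + (norm x2 - 1) *\<^sub>R z" by (simp add: algebra_simps)
  have "norm ((norm x2 - 1) *\<^sub>R z) \<le> \<bar>1 - norm x2\<bar>"
  proof -
    have "norm ((norm x2 - 1) *\<^sub>R z) = \<bar>norm x2 - 1\<bar> * norm z" by simp
    also have "\<dots> \<le> \<bar>norm x2 - 1\<bar> * 1" using assms by (intro mult_left_mono) auto
    finally show ?thesis by simp
  qed
  then show ?thesis unfolding e by (metis add_left_mono norm_triangle_ineq order_trans)
qed



lemma tri: "norm (a - c) \<le> norm (a - b) + norm (b - (c::'b::real_normed_vector))"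
  using norm_triangle_ineq[of "a - b" "b - c"] by simp

lemma arithB:
  fixes \<delta> r :: real
  assumes "0 < \<delta>" "\<delta> < 1/10" "0 \<le> r" "r \<le> 1 + \<delta>"
  shows "2 * \<delta> + (2 + \<delta>) * r + 2 * \<bar>1 - r\<bar> < 2 + 10 * \<delta>"
proof -
  have eq: "(2 + \<delta>) * r = 2 * r + \<delta> * r" by (simp add: algebra_simps)
  show ?thesis
  proof (cases "r \<le> 1")
    case True
    have "\<delta> * r \<le> \<delta>" using mult_left_mono[of r 1 \<delta>] assms True by simp
    moreover have "\<bar>1 - r\<bar> = 1 - r" using True by simp
    ultimately show ?thesis using assms by (simp add: algebra_simps)
  next
    case False
    have "\<delta> * r \<le> \<delta> * (1 + \<delta>)" using assms by (intro mult_left_mono) auto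
    moreover have "\<delta> * (1 + \<delta>) = \<delta> + \<delta> * \<delta>" by (simp add: algebra_simps)
    moreover have "\<delta> * \<delta> \<le> \<delta> * (1/10)" using assms by (intro mult_left_mono) auto
    ultimately have k: "\<delta> * r \<le> \<delta> + \<delta> / 10" by linarith
    have "\<bar>1 - r\<bar> = r - 1" using False by simp
    then have g: "2 * \<delta> + (2 + \<delta>) * r + 2 * \<bar>1 - r\<bar> = 2 * \<delta> + 4 * r + \<delta> * r - 2"
      by (simp add: algebra_simps)
    have "2 * \<delta> + 4 * r + \<delta> * r - 2 < 2 + 10 * \<delta>" using k assms by linarith
    then show ?thesis unfolding g .
  qed
qed

lemma arithB2:
  fixes \<delta> r :: real
  assumes "0 < \<delta>" "\<delta> < 1/10" "r \<ge> 1 - 2 * \<delta>"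
  shows "(1 - \<delta>) * r - \<delta> > 1 - 10 * \<delta>"
proof -
  have "(1 - \<delta>) * r \<ge> (1 - \<delta>) * (1 - 2 * \<delta>)" using assms by (intro mult_left_mono) auto
  moreover have "(1 - \<delta>) * (1 - 2 * \<delta>) = 1 - 3 * \<delta> + 2 * (\<delta> * \<delta>)" by (simp add: algebra_simps)
  moreover have "\<delta> * \<delta> \<ge> 0" by simp
  ultimately show ?thesis using assms by linarith
qed

lemma Linf_main:
  fixes M :: "'a measure" and f1 f2 :: "'a \<Rightarrow> 'b::banach"
  assumes cm: "complete_measure M" and sf: "sigma_finite_measure M" and H: "banach_property_star_star TYPE('b)"
    and f1: "f1 \<in> Linf_set M" and f2: "f2 \<in> Linf_set M" and n1: "Linf_norm M f1 = 1" and n2: "Linf_norm M f2 = 1"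
    and e: "0 < \<epsilon>" "\<epsilon> < 1"
  shows "\<exists>y h1 h2. (\<forall>u\<in>Linf_set M. \<forall>v\<in>Linf_set M. y (fun_add u v) = y u + y v) \<and>
        (\<forall>c. \<forall>u\<in>Linf_set M. y (fun_scal c u) = c * y u) \<and>
        (\<forall>z\<in>Linf_set M. \<bar>y z\<bar> \<le> Linf_norm M z) \<and> 1 - \<epsilon> < y f1 \<and> h1 \<in> Linf_set M \<and> h2 \<in> Linf_set M \<and>
        Linf_norm M h1 \<le> 1 \<and> Linf_norm M h2 \<le> 1 \<and> 1 - \<epsilon> < y h1 \<and> 1 - \<epsilon> < y h2 \<and>
        Linf_norm M (fun_add f2 (fun_scal (-1) h1)) + Linf_norm M (fun_add f2 h2) < 2 + \<epsilon>"
proof -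
  define \<delta> where "\<delta> = \<epsilon> / 10"
  have dl: "0 < \<delta>" "\<delta> < 1/10" using e by (auto simp: \<delta>_def)
  have ae1: "AE x in M. norm (f1 x) \<le> 1" using Linf_norm_AE[OF f1] n1 by simp
  have ae2: "AE x in M. norm (f2 x) \<le> 1" using Linf_norm_AE[OF f2] n2 by simp
  have sm1: "strongly_measurable M f1" using f1 by (simp add: Linf_set_def)
  have sm2: "strongly_measurable M f2" using f2 by (simp add: Linf_set_def)
  obtain s1 where s1: "\<And>n. simple_function M (s1 n)" "AE x in M. (\<lambda>n. s1 n x) \<longlonglongrightarrow> f1 x"
    using sm1 unfolding strongly_measurable_def by blast
  obtain s2 where s2: "\<And>n. simple_function M (s2 n)" "AE x in M. (\<lambda>n. s2 n x) \<longlonglongrightarrow> f2 x"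
    using sm2 unfolding strongly_measurable_def by blast
  obtain Fam where Fam: "countable Fam" "Fam \<subseteq> sets M" "\<Union>Fam = space M" "\<forall>a\<in>Fam. emeasure M a \<noteq> \<infinity>"
    using sigma_finite_measure.sigma_finite_countable[OF sf] by blast
  define D1 where "D1 = (\<Union>n. s1 n ` space M)"
  define D2 where "D2 = (\<Union>n. s2 n ` space M)"
  have cD: "countable D1" "countable D2" unfolding D1_def D2_def
    by (rule countable_UN, simp, rule countable_finite, use s1(1) s2(1) in \<open>simp add: simple_function_def\<close>)+
  define I where "I = D1 \<times> D2 \<times> Fam"
  have cI: "countable I" unfolding I_def using cD Fam(1) by auto
  define B where "B q = {x\<in>space M. norm (f1 x - fst q) < \<delta> \<and> norm (f2 x - fst (snd q)) < \<delta> \<and> 1 - \<delta> < norm (f1 x)} \<inter> snd (snd q)" for q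
  have mB: "B q \<in> sets M" if "q \<in> I" for q
  proof -
    have [measurable]: "(\<lambda>x. norm (f1 x - fst q)) \<in> borel_measurable M"
      by (rule sm_norm_meas[OF cm sm_diff[OF sm1 sm_simple[OF simple_function_const]]])
    have [measurable]: "(\<lambda>x. norm (f2 x - fst (snd q))) \<in> borel_measurable M"
      by (rule sm_norm_meas[OF cm sm_diff[OF sm2 sm_simple[OF simple_function_const]]])
    have [measurable]: "(\<lambda>x. norm (f1 x)) \<in> borel_measurable M" by (rule sm_norm_meas[OF cm sm1])
    have [measurable]: "snd (snd q) \<in> sets M" using that Fam(2) by (auto simp: I_def)
    show ?thesis unfolding B_def by measurable
  qed
  have "\<exists>q\<in>I. emeasure M (B q) \<noteq> 0"
  proof (rule ccontr)
    assume "\<not> (\<exists>q\<in>I. emeasure M (B q) \<noteq> 0)"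
    then have "B q \<in> null_sets M" if "q \<in> I" for q using that mB[OF that] by blast
    then have N: "(\<Union>q\<in>I. B q) \<in> null_sets M" by (intro null_sets_UN' cI)
    have "AE x in M. norm (f1 x) \<le> 1 - \<delta>"
      using AE_not_in[OF N] s1(2) s2(2) AE_space
    proof eventually_elim
      fix x assume x: "x \<notin> (\<Union>q\<in>I. B q)" "(\<lambda>n. s1 n x) \<longlonglongrightarrow> f1 x" "(\<lambda>n. s2 n x) \<longlonglongrightarrow> f2 x" "x \<in> space M"
      show "norm (f1 x) \<le> 1 - \<delta>"
      proof (rule ccontr)
        assume big: "\<not> norm (f1 x) \<le> 1 - \<delta>"
        obtain n where n: "norm (s1 n x - f1 x) < \<delta>" using x(2) dl unfolding LIMSEQ_iff by blast
        obtain m where m: "norm (s2 m x - f2 x) < \<delta>" using x(3) dl unfolding LIMSEQ_iff by blast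
        obtain F where F: "F \<in> Fam" "x \<in> F" using x(4) Fam(3) by blast
        have "(s1 n x, s2 m x, F) \<in> I" using F x(4) by (auto simp: I_def D1_def D2_def)
        moreover have "x \<in> B (s1 n x, s2 m x, F)"
          using n m F x(4) big by (auto simp: B_def norm_minus_commute)
        ultimately show False using x(1) by blast
      qed
    qed
    then have "Linf_norm M f1 \<le> 1 - \<delta>" using dl by (intro Linf_norm_le) auto
    then show False using n1 dl by simp
  qed
  then obtain q where q: "q \<in> I" "emeasure M (B q) \<noteq> 0" by blast
  obtain x1 x2 F where qe: "q = (x1, x2, F)" by (cases q) auto
  define A where "A = B q"
  have A: "A \<in> sets M" "A \<subseteq> space M" unfolding A_def by (rule mB[OF q(1)]) (auto simp: B_def)
  have Ap: "norm (f1 x - x1) < \<delta>" "norm (f2 x - x2) < \<delta>" "1 - \<delta> < norm (f1 x)" if "x \<in> A" for x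
    using that by (auto simp: A_def B_def qe)
  have AF: "A \<subseteq> F" "F \<in> Fam" using q(1) by (auto simp: A_def B_def qe I_def)
  have Afin: "emeasure M A \<noteq> \<infinity>"
  proof -
    have "emeasure M A \<le> emeasure M F" using AF Fam(2) by (intro emeasure_mono) auto
    then show ?thesis using Fam(4) AF(2) by (auto simp: top_unique)
  qed
  define mA where "mA = measure M A"
  have emA: "emeasure M A = ennreal mA" using emeasure_eq_ennreal_measure[OF Afin[unfolded infinity_ennreal_def]] by (simp add: mA_def)
  have mApos: "mA > 0" using q(2) emA unfolding A_def[symmetric] mA_def
    by (metis ennreal_0 measure_nonneg order_le_less)
  obtain a where a: "a \<in> A" using ae_ex_in[OF A(1) q(2)[folded A_def], of "\<lambda>x. True"] by auto
  have x1big: "norm x1 \<ge> 1 - 2 * \<delta>"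
    using Ap[OF a] nt2[of "f1 a" x1] by (simp add: norm_minus_commute)
  obtain a2 where a2: "a2 \<in> A" "norm (f2 a2) \<le> 1" using ae_ex_in[OF A(1) q(2)[folded A_def] ae2] by auto
  have x2small: "norm x2 \<le> 1 + \<delta>"
    using Ap(2)[OF a2(1)] a2(2) nt2[of x2 "f2 a2"] by (simp add: norm_minus_commute)
  have x1nz: "x1 \<noteq> 0" using x1big dl by auto
  have ne0: "norm (sgn x1) = 1" using x1nz by (simp add: norm_sgn)
  obtain Y z w where Y: "\<forall>u v. Y (u + v) = Y u + Y v" "\<forall>c u. Y (c *\<^sub>R u) = c * Y u"
     "\<forall>x. \<bar>Y x\<bar> \<le> norm x" "Y x1 \<ge> (1 - \<delta>) * norm x1" "norm z \<le> 1" "norm w \<le> 1"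
     "Y z > 1 - \<delta>" "Y w > 1 - \<delta>"
     "norm (x2 - norm x2 *\<^sub>R z) + norm (x2 + norm x2 *\<^sub>R w) \<le> (2 + \<delta>) * norm x2"
    using star_point2[OF H ne0 dl(1), of x1 x2] by blast
  have Ycont: "continuous_on UNIV Y" by (rule lin_cont) (use Y in blast)+
  have indm: "indicator A \<in> borel_measurable M" using A(1) by simp
  have intA: "integrable M (\<lambda>x. indicator A x * c)" for c :: real
    using A(1) Afin by (simp add: less_top)
  have intAc: "(\<integral>x. indicator A x * c \<partial>M) = mA * c" for c :: real
  proof -
    have "A \<inter> space M = A" using A(2) by auto
    then show ?thesis by (simp add: mA_def)
  qed
  have Yint: "integrable M (\<lambda>x. indicator A x * Y (h x))" if h: "h \<in> Linf_set M" for h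
  proof (rule Bochner_Integration.integrable_bound[OF intA[of "Linf_norm M h"]])
    have "(\<lambda>x. Y (h x)) \<in> borel_measurable M"
      using h by (intro sm_comp_meas[OF cm _ Ycont]) (simp add: Linf_set_def)
    then show "(\<lambda>x. indicator A x * Y (h x)) \<in> borel_measurable M" using indm by measurable
    show "AE x in M. norm (indicator A x * Y (h x)) \<le> norm (indicator A x * Linf_norm M h)"
      using Linf_norm_AE[OF h]
      by eventually_elim (use Linf_norm_nonneg[OF h] in \<open>auto simp: indicator_def intro: order_trans[OF Y(3)[rule_format]]\<close>)
  qed
  define y where "y h = (\<integral>x. indicator A x * Y (h x) \<partial>M) / mA" for h
  have yadd: "\<forall>u\<in>(Linf_set M :: ('a \<Rightarrow> 'b) set). \<forall>v\<in>Linf_set M. y (fun_add u v) = y u + y v"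
    using Yint Y(1) by (simp add: y_def fun_add_def distrib_left add_divide_distrib)
  have ysc: "\<forall>c. \<forall>u\<in>(Linf_set M :: ('a \<Rightarrow> 'b) set). y (fun_scal c u) = c * y u"
  proof (intro allI ballI)
    fix c and u :: "'a \<Rightarrow> 'b"
    have "(\<lambda>x. indicator A x * Y (fun_scal c u x)) = (\<lambda>x. c * (indicator A x * Y (u x)))"
      using Y(2) by (auto simp: fun_scal_def)
    then show "y (fun_scal c u) = c * y u" by (simp add: y_def)
  qed
  have ybd: "\<forall>h\<in>(Linf_set M :: ('a \<Rightarrow> 'b) set). \<bar>y h\<bar> \<le> Linf_norm M h"
  proof
    fix h :: "'a \<Rightarrow> 'b" assume h: "h \<in> Linf_set M"
    have p: "AE x in M. \<bar>indicator A x * Y (h x)\<bar> \<le> indicator A x * Linf_norm M h"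
      using Linf_norm_AE[OF h]
      by eventually_elim (use Linf_norm_nonneg[OF h] in \<open>auto simp: indicator_def intro: order_trans[OF Y(3)[rule_format]]\<close>)
    have "(\<integral>x. indicator A x * Y (h x) \<partial>M) \<le> (\<integral>x. indicator A x * Linf_norm M h \<partial>M)"
      using p by (intro integral_mono_AE Yint[OF h] intA) (auto elim: AE_mp)
    moreover have "(\<integral>x. - (indicator A x * Y (h x)) \<partial>M) \<le> (\<integral>x. indicator A x * Linf_norm M h \<partial>M)"
      using p by (intro integral_mono_AE integrable_minus Yint[OF h] intA) (auto elim: AE_mp)
    ultimately have "\<bar>\<integral>x. indicator A x * Y (h x) \<partial>M\<bar> \<le> mA * Linf_norm M h"
      unfolding intAc by simp
    then show "\<bar>y h\<bar> \<le> Linf_norm M h" using mApos by (simp add: y_def pos_divide_le_eq mult.commute)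
  qed
  define c0 where "c0 = (1 - \<delta>) * norm x1 - \<delta>"
  have yf1: "1 - \<epsilon> < y f1"
  proof -
    have "(\<integral>x. indicator A x * c0 \<partial>M) \<le> (\<integral>x. indicator A x * Y (f1 x) \<partial>M)"
    proof (intro integral_mono intA Yint[OF f1])
      fix x
      show "indicator A x * c0 \<le> indicator A x * Y (f1 x)"
      proof (cases "x \<in> A")
        case True
        have "Y (f1 x) = Y x1 + Y (f1 x - x1)" using Y(1)[rule_format, of x1 "f1 x - x1"] by simp
        moreover have "- norm (f1 x - x1) \<le> Y (f1 x - x1)" using Y(3)[rule_format, of "f1 x - x1"] by linarith
        ultimately show ?thesis using True Ap(1)[OF True] Y(4) by (simp add: c0_def)
      qed simp
    qed
    then have "mA * c0 \<le> mA * y f1" unfolding intAc using mApos by (simp add: y_def)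
    then have "c0 \<le> y f1" using mApos by simp
    moreover have "c0 > 1 - \<epsilon>" using arithB2[OF dl x1big] by (simp add: c0_def \<delta>_def)
    ultimately show ?thesis by simp
  qed
  define h1 where "h1 x = (if x \<in> A then z else f2 x)" for x
  define h2 where "h2 x = (if x \<in> A then w else (-1) *\<^sub>R f2 x)" for x
  have smh1: "strongly_measurable M h1" unfolding h1_def[abs_def]
    by (rule sm_If[OF sm_simple[OF simple_function_const] sm2 A(1)])
  have smh2: "strongly_measurable M h2" unfolding h2_def[abs_def]
    by (rule sm_If[OF sm_simple[OF simple_function_const] sm_scal[OF sm2] A(1)])
  have aeh1: "AE x in M. norm (h1 x) \<le> 1" using ae2 by eventually_elim (use Y in \<open>auto simp: h1_def\<close>)
  have aeh2: "AE x in M. norm (h2 x) \<le> 1" using ae2 by eventually_elim (use Y in \<open>auto simp: h2_def\<close>)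
  have h1V: "h1 \<in> Linf_set M" by (rule Linf_setI[OF smh1 aeh1])
  have h2V: "h2 \<in> Linf_set M" by (rule Linf_setI[OF smh2 aeh2])
  have Nh: "Linf_norm M h1 \<le> 1" "Linf_norm M h2 \<le> 1"
    using Linf_norm_le[OF _ aeh1] Linf_norm_le[OF _ aeh2] by auto
  have yh: "1 - \<epsilon> < y h1" "1 - \<epsilon> < y h2"
  proof -
    have "(\<lambda>x. indicator A x * Y (h1 x)) = (\<lambda>x. indicator A x * Y z)"
      by (auto simp: h1_def indicator_def)
    then have "y h1 = Y z" using mApos A(2) by (simp add: y_def mA_def Int_absorb2)
    then show "1 - \<epsilon> < y h1" using Y(7) by (simp add: \<delta>_def) (use e in linarith)
    have "(\<lambda>x. indicator A x * Y (h2 x)) = (\<lambda>x. indicator A x * Y w)"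
      by (auto simp: h2_def indicator_def)
    then have "y h2 = Y w" using mApos A(2) by (simp add: y_def mA_def Int_absorb2)
    then show "1 - \<epsilon> < y h2" using Y(8) by (simp add: \<delta>_def) (use e in linarith)
  qed
  have D1: "Linf_norm M (fun_add f2 (fun_scal (-1) h1)) \<le> \<delta> + norm (x2 - z)"
  proof (rule Linf_norm_le)
    show "0 \<le> \<delta> + norm (x2 - z)" using dl by simp
    show "AE x in M. norm (fun_add f2 (fun_scal (- 1) h1) x) \<le> \<delta> + norm (x2 - z)"
    proof (rule AE_I2)
      fix x show "norm (fun_add f2 (fun_scal (- 1) h1) x) \<le> \<delta> + norm (x2 - z)"
      proof (cases "x \<in> A")
        case True
        then show ?thesis using Ap(2)[OF True] tri[of "f2 x" z x2]
          by (simp add: fun_add_def fun_scal_def h1_def)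
      qed (use dl in \<open>simp add: fun_add_def fun_scal_def h1_def\<close>)
    qed
  qed
  have D2: "Linf_norm M (fun_add f2 h2) \<le> \<delta> + norm (x2 + w)"
  proof (rule Linf_norm_le)
    show "0 \<le> \<delta> + norm (x2 + w)" using dl by simp
    show "AE x in M. norm (fun_add f2 h2 x) \<le> \<delta> + norm (x2 + w)"
    proof (rule AE_I2)
      fix x show "norm (fun_add f2 h2 x) \<le> \<delta> + norm (x2 + w)"
      proof (cases "x \<in> A")
        case True
        then show ?thesis using Ap(2)[OF True] tri[of "f2 x" "- w" x2]
          by (simp add: fun_add_def h2_def)
      qed (use dl in \<open>simp add: fun_add_def h2_def\<close>)
    qed
  qed
  have dist: "Linf_norm M (fun_add f2 (fun_scal (-1) h1)) + Linf_norm M (fun_add f2 h2) < 2 + \<epsilon>"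
  proof -
    have a: "norm (x2 - z) \<le> norm (x2 - norm x2 *\<^sub>R z) + \<bar>1 - norm x2\<bar>" by (rule near_bound[OF Y(5)])
    have b: "norm (x2 + w) \<le> norm (x2 + norm x2 *\<^sub>R w) + \<bar>1 - norm x2\<bar>"
      using near_bound[of "- w" x2] Y(6) by simp
    have "2 * \<delta> + (2 + \<delta>) * norm x2 + 2 * \<bar>1 - norm x2\<bar> < 2 + 10 * \<delta>"
      by (rule arithB[OF dl norm_ge_zero x2small])
    then show ?thesis using D1 D2 a b Y(9) by (simp add: \<delta>_def)
  qed
  show ?thesis
    apply (rule exI[of _ y], rule exI[of _ h1], rule exI[of _ h2])
    using yadd ysc ybd yf1 h1V h2V Nh yh dist by simp
qed

lemma Linf_star:
  fixes M :: "'a measure"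
  assumes cm: "complete_measure M" and sf: "sigma_finite_measure M" and H: "banach_property_star_star TYPE('b::banach)"
  shows "property_star_star (Linf_set M :: ('a \<Rightarrow> 'b) set) fun_add fun_scal (Linf_norm M)"
proof (rule star_starI)
  show "\<forall>u\<in>(Linf_set M :: ('a \<Rightarrow> 'b) set). \<forall>v\<in>Linf_set M. fun_add u v \<in> Linf_set M"
    using Linf_add by blast
  show "\<forall>u\<in>(Linf_set M :: ('a \<Rightarrow> 'b) set). fun_scal (-1) u \<in> Linf_set M"
    using Linf_scal by blast
  show "\<forall>u::'a \<Rightarrow> 'b. fun_scal (-1) (fun_scal (-1) u) = u" by (simp add: fun_scal_def)
  show "\<forall>u\<in>(Linf_set M :: ('a \<Rightarrow> 'b) set). 0 \<le> Linf_norm M u" using Linf_norm_nonneg by blast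
  show "\<exists>y h1 h2. (\<forall>u\<in>Linf_set M. \<forall>v\<in>Linf_set M. y (fun_add u v) = y u + y v) \<and>
        (\<forall>c. \<forall>u\<in>Linf_set M. y (fun_scal c u) = c * y u) \<and>
        (\<forall>z\<in>Linf_set M. \<bar>y z\<bar> \<le> Linf_norm M z) \<and> 1 - \<epsilon> < y x1 \<and> h1 \<in> Linf_set M \<and> h2 \<in> Linf_set M \<and>
        Linf_norm M h1 \<le> 1 \<and> Linf_norm M h2 \<le> 1 \<and> 1 - \<epsilon> < y h1 \<and> 1 - \<epsilon> < y h2 \<and>
        Linf_norm M (fun_add x2 (fun_scal (-1) h1)) + Linf_norm M (fun_add x2 h2) < 2 + \<epsilon>"
    if "x1 \<in> Linf_set M" "x2 \<in> Linf_set M" "Linf_norm M x1 = 1" "Linf_norm M x2 = 1" "0 < \<epsilon>" "\<epsilon> < 1"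
    for x1 x2 :: "'a \<Rightarrow> 'b" and \<epsilon>
    by (rule Linf_main[OF cm sf H that])
qed

theorem theorem4p8:
  fixes M :: "'a measure"
  assumes "complete_measure M"
    and "sigma_finite_measure M"
    and "banach_property_star_star TYPE('b::banach)"
  shows "property_star_star (L1_set M :: ('a \<Rightarrow> 'b) set) fun_add fun_scal (L1_norm M) \<and>
         property_star_star (Linf_set M :: ('a \<Rightarrow> 'b) set) fun_add fun_scal (Linf_norm M)"
  using L1_star[OF assms(1,3)] Linf_star[OF assms] by blast


end
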